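(* Let $\mathbf{A} \in \mathbb{R}^{n\times n}$ be invertible and let $\hat{\mathbf{A}}$ be a random $n\times n$ real matrix, invertible almost surely, such that $\mathbb{E}[\hat{\mathbf{A}}^{-2}]$ exists. Assume: (1) (unbiased noise) $\mathbb{E}[\hat{\mathbf{A}}] = \mathbf{A}$; (2) (isotropy) the right-hand side $\mathbf{b}$ is random with auto-correlation $\mathbf{R} = \mathbb{E}[\mathbf{b}\mathbf{b}^T] = \mathbf{I}$; (3) (noise symmetry) $\hat{\mathbf{Z}} = \hat{\mathbf{A}} - \mathbf{A}$ has the same distribution as $-\hat{\mathbf{Z}}$; (4) (residual norm) the error is measured in the norm given by $\mathbf{B} = \mathbf{A}^T\mathbf{A}$. Consider the augmented inverse operator $\hat{\mathbf{A}}^{-1} - \beta \hat{\mathbf{K}}$ with augmentation matrix $\hat{\mathbf{K}} = \hat{\mathbf{A}}^{-1}$, and the optimal augmentation factor $$\beta^* = \arg\min_{\beta\in\mathbb{R}} \mathbb{E}\big[\|\hat{\mathbf{A}}^{-1} - \beta\hat{\mathbf{K}} - \mathbf{A}^{-1}\|_{\mathbf{B},\mathbf{R}}^2\big] = \frac{\mathbb{E}\langle \hat{\mathbf{K}}, \hat{\mathbf{A}}^{-1} - \mathbf{A}^{-1}\rangle_{\mathbf{B},\mathbf{R}}}{\mathbb{E}\|\hat{\mathbf{K}}\|_{\mathbf{B},\mathbf{R}}^2}.$$ Then $\beta^* \geq 0$; equivalently, $\mathbb{E}\,\mathrm{tr}\big[\hat{\mathbf{A}}^{-T}\mathbf{A}^T\mathbf{A}(\hat{\mathbf{A}}^{-1}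 - \mathbf{A}^{-1})\big] \geq 0$.
   Context: For symmetric positive definite $\mathbf{B}$ and symmetric positive semidefinite $\mathbf{R}$, the inner product and semi-norm on $n\times n$ matrices are $\langle \mathbf{M}, \mathbf{N}\rangle_{\mathbf{B},\mathbf{R}} = \mathrm{tr}(\mathbf{R}^{1/2}\mathbf{M}^T\mathbf{B}\mathbf{N}\mathbf{R}^{1/2})$ and $\|\mathbf{M}\|_{\mathbf{B},\mathbf{R}}^2 = \langle \mathbf{M},\mathbf{M}\rangle_{\mathbf{B},\mathbf{R}}$. With $\mathbf{R} = \mathbb{E}[\mathbf{b}\mathbf{b}^T]$ and $\mathbf{b}$ independent of $\hat{\mathbf{A}}$, $\mathbb{E}\|\mathbf{M}\|^2_{\mathbf{B},\mathbf{R}}$ equals the expected squared error $\mathbb{E}\|\mathbf{M}\mathbf{b}\|_{\mathbf{B}}^2$ where $\|\mathbf{v}\|_{\mathbf{B}}^2 = \mathbf{v}^T\mathbf{B}\mathbf{v}$. Expectations are over the distribution of $\hat{\mathbf{A}}$. *)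

theory Defs
  imports "HOL-Analysis.Analysis" "HOL-Probability.Probability"
begin

definition psd_mat :: "real^'n^'n \<Rightarrow> bool" where
  "psd_mat S \<longleftrightarrow> transpose S = S \<and> (\<forall>x. 0 \<le> x \<bullet> (S *v x))"

definition mat_sqrt :: "real^'n^'n \<Rightarrow> real^'n^'n" where
  "mat_sqrt R = (SOME S. psd_mat S \<and> S ** S = R)"

definition ip_BR :: "real^'n^'n \<Rightarrow> real^'n^'n \<Rightarrow> real^'n^'n \<Rightarrow> real^'n^'n \<Rightarrow> real" where
  "ip_BR B R M N = trace (mat_sqrt R ** transpose M ** B ** N ** mat_sqrt R)"

definition normsq_BR :: "real^'n^'n \<Rightarrow> real^'n^'n \<Rightarrow> real^'n^'n \<Rightarrow> real" where
  "normsq_BR B R M = ip_BR B R M M"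

end

theory Submission
  imports Defs
begin


lemma mat_sqrt_one: "mat_sqrt (mat 1 :: real^'n^'n) ** mat_sqrt (mat 1) = mat 1"
proof -
  have "psd_mat (mat 1 :: real^'n^'n) \<and> (mat 1 :: real^'n^'n) ** mat 1 = mat 1"
    by (simp add: psd_mat_def transpose_mat)
  then show ?thesis unfolding mat_sqrt_def by (metis (mono_tags, lifting) someI)
qed

lemma ip_BR_one: "ip_BR B (mat 1) M N = trace (transpose M ** B ** N)"
proof -
  let ?S = "mat_sqrt (mat 1) :: real^'n^'n"
  have "ip_BR B (mat 1) M N = trace (?S ** (?S ** transpose M ** B ** N))"
    unfolding ip_BR_def by (rule trace_mul_sym)
  also have "\<dots> = trace ((?S ** ?S) ** (transpose M ** B ** N))"
    by (simp add: matrix_mul_assoc)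
  finally show ?thesis by (simp add: mat_sqrt_one matrix_mul_assoc)
qed

lemma inv_props: "invertible (Y::real^'n^'n) \<Longrightarrow> Y ** matrix_inv Y = mat 1 \<and> matrix_inv Y ** Y = mat 1"
  unfolding matrix_inv_def invertible_def by (rule someI_ex)

lemma inv_noninv: "\<not> invertible (Y::real^'n^'n) \<Longrightarrow> matrix_inv Y = (SOME A'. False)"
proof -
  assume "\<not> invertible Y"
  then have "(\<lambda>A'::real^'n^'n. Y ** A' = mat 1 \<and> A' ** Y = mat 1) = (\<lambda>_. False)"
    unfolding invertible_def by auto
  then show ?thesis unfolding matrix_inv_def by simp
qed

lemma cont_det: "continuous_on S (det :: real^'n^'n \<Rightarrow> real)"
  unfolding det_def by (intro continuous_intros)

lemma mv_axis: "((M::real^'n^'n) *v axis j 1) $ k = M $ k $ j"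
proof -
  have "((M::real^'n^'n) *v axis j 1) $ k = (\<Sum>j'\<in>UNIV. M$k$j' * (if j' = j then 1 else 0))"
    by (simp add: matrix_vector_mult_def axis_def vec_lambda_beta)
  also have "\<dots> = (\<Sum>j'\<in>UNIV. if j' = j then M$k$j' else 0)"
    by (rule sum.cong) auto
  also have "\<dots> = M$k$j" by simp
  finally show ?thesis .
qed

lemma inv_cramer:
  assumes "det (Y::real^'n^'n) \<noteq> 0"
  shows "matrix_inv Y = (\<chi> k j. det (\<chi> i j'. if j' = k then axis j 1 $ i else Y$i$j') / det Y)"
proof -
  have inv: "invertible Y" using assms invertible_det_nz by blast
  have "matrix_inv Y $ k $ j = det (\<chi> i j'. if j' = k then axis j 1 $ i else Y$i$j') / det Y" for k j
  proof -
    have "Y *v (matrix_inv Y *v axis j 1) = axis j 1"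
    proof -
      have "Y ** matrix_inv Y = mat 1" using inv_props[OF inv] by blast
      then show ?thesis by (simp add: matrix_vector_mul_assoc)
    qed
    then have "matrix_inv Y *v axis j 1 = (\<chi> k. det(\<chi> i j'. if j'=k then axis j 1 $i else Y$i$j') / det Y)"
      using cramer[OF assms] by blast
    then have "(matrix_inv Y *v axis j 1) $ k = det(\<chi> i j'. if j'=k then axis j 1 $i else Y$i$j') / det Y"
      by simp
    then show ?thesis by (simp only: mv_axis)
  qed
  then show ?thesis by (simp add: vec_eq_iff)
qed

lemma cont_inv: "continuous_on {Y::real^'n^'n. det Y \<noteq> 0} matrix_inv"
proof -
  have c: "continuous_on {Y::real^'n^'n. det Y \<noteq> 0}
     (\<lambda>Y. \<chi> k j. det (\<chi> i j'. if j' = k then axis j 1 $ i else Y$i$j') / det Y)"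
  proof (intro continuous_on_vec_lambda continuous_on_divide)
    fix k j
    have cu: "continuous_on UNIV (\<lambda>Y::real^'n^'n. (\<chi> i j'. if j' = k then axis j 1 $ i else Y$i$j'))"
    proof (intro continuous_on_vec_lambda)
      fix i j'
      show "continuous_on UNIV (\<lambda>Y::real^'n^'n. if j' = k then axis j 1 $ i else Y$i$j')"
      proof (cases "j' = k")
        case True then show ?thesis by (simp add: continuous_on_const)
      next
        case False
        have "continuous_on UNIV (\<lambda>Y::real^'n^'n. Y$i$j')"
          by (rule continuous_on_component, rule continuous_on_component, rule continuous_on_id)
        then show ?thesis using False by simp
      qed
    qed
    have "continuous_on {Y::real^'n^'n. det Y \<noteq> 0} (det \<circ> (\<lambda>Y::real^'n^'n. (\<chi> i j'. if j' = k then axis j 1 $ i else Y$i$j')))"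
      by (rule continuous_on_compose[OF continuous_on_subset[OF cu subset_UNIV] cont_det])
    then show "continuous_on {Y::real^'n^'n. det Y \<noteq> 0} (\<lambda>Y. det (\<chi> i j'. if j' = k then axis j 1 $ i else Y$i$j'))"
      by (simp add: o_def)
  qed (simp_all add: cont_det)
  show ?thesis by (rule continuous_on_cong[THEN iffD1, OF refl _ c]) (simp add: inv_cramer)
qed

lemma meas_inv: "matrix_inv \<in> borel_measurable (borel :: (real^'n^'n) measure)"
proof -
  have o: "open {Y::real^'n^'n. det Y \<noteq> 0}"
    by (intro open_Collect_neq cont_det continuous_on_const)
  have "(\<lambda>Y. if Y \<in> {Y::real^'n^'n. det Y \<noteq> 0} then matrix_inv Y else (SOME A'. False)) \<in> borel_measurable borel"
    by (intro borel_measurable_continuous_on_if cont_inv continuous_on_const borel_open o)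
  moreover have "(\<lambda>Y. if Y \<in> {Y::real^'n^'n. det Y \<noteq> 0} then matrix_inv Y else (SOME A'. False)) = matrix_inv"
    by (auto simp: fun_eq_iff inv_noninv invertible_det_nz)
  ultimately show ?thesis by simp
qed



lemma msub_ldistrib: "(A::real^'n^'n) ** (B - C) = A ** B - A ** C"
  by (simp add: matrix_matrix_mult_def vec_eq_iff sum_subtractf right_diff_distrib)

lemma madd_rdistrib: "((A::real^'n^'n) + B) ** C = A ** C + B ** C"
  by (simp add: matrix_matrix_mult_def vec_eq_iff sum.distrib distrib_right)

lemma trace_TT: "trace (transpose (M::real^'n^'n) ** N) = (\<Sum>i\<in>UNIV. \<Sum>k\<in>UNIV. M$k$i * N$k$i)"
  by (simp add: trace_def matrix_matrix_mult_def transpose_def)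

lemma trace_MM: "trace ((M::real^'n^'n) ** N) = (\<Sum>i\<in>UNIV. \<Sum>k\<in>UNIV. M$i$k * N$k$i)"
  by (simp add: trace_def matrix_matrix_mult_def)

lemma trace_transp: "trace (transpose (M::real^'n^'n)) = trace M"
  by (simp add: trace_def transpose_def)

lemma trace_TT_nonneg: "0 \<le> trace (transpose (M::real^'n^'n) ** M)"
  unfolding trace_TT by (intro sum_nonneg) auto

lemma key_ineq:
  fixes X1 X2 :: "real^'n^'n"
  assumes "X1 + X2 = X1 ** X2 + X1 ** X2"
  shows "trace X1 + trace X2 \<le> trace (transpose X1 ** X1) + trace (transpose X2 ** X2)"
proof -
  have "trace X1 + trace X2 = trace (X1 ** X2) + trace (X1 ** X2)"
    by (metis assms trace_add)
  also have "\<dots> = (\<Sum>i\<in>UNIV. \<Sum>k\<in>UNIV. 2 * (X1$i$k * X2$k$i))"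
    unfolding trace_MM by (simp add: sum.distrib[symmetric])
  also have "\<dots> \<le> (\<Sum>i\<in>UNIV. \<Sum>k\<in>UNIV. (X1$i$k)\<^sup>2 + (X2$k$i)\<^sup>2)"
  proof (intro sum_mono)
    fix i k
    have "0 \<le> (X1$i$k - X2$k$i)\<^sup>2" by simp
    then show "2 * (X1$i$k * X2$k$i) \<le> (X1$i$k)\<^sup>2 + (X2$k$i)\<^sup>2"
      by (simp add: power2_eq_square algebra_simps)
  qed
  also have "\<dots> = (\<Sum>i\<in>UNIV. \<Sum>k\<in>UNIV. (X1$i$k)\<^sup>2) + (\<Sum>i\<in>UNIV. \<Sum>k\<in>UNIV. (X2$k$i)\<^sup>2)"
    by (simp add: sum.distrib)
  also have "(\<Sum>i\<in>UNIV. \<Sum>k\<in>UNIV. (X1$i$k)\<^sup>2) = (\<Sum>k\<in>UNIV. \<Sum>i\<in>UNIV. (X1$i$k)\<^sup>2)"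
    by (rule sum.swap)
  also have "(\<Sum>k\<in>UNIV. \<Sum>i\<in>UNIV. (X1$i$k)\<^sup>2) + (\<Sum>i\<in>UNIV. \<Sum>k\<in>UNIV. (X2$k$i)\<^sup>2)
      = trace (transpose X1 ** X1) + trace (transpose X2 ** X2)"
    unfolding trace_TT by (simp add: power2_eq_square)
  finally show ?thesis .
qed

lemma F_formula:
  fixes A Y :: "real^'n^'n"
  assumes "invertible A"
  shows "trace (transpose (matrix_inv Y) ** (transpose A ** A) ** (matrix_inv Y - matrix_inv A))
    = trace (transpose (A ** matrix_inv Y) ** (A ** matrix_inv Y)) - trace (A ** matrix_inv Y)"
proof -
  have AA: "A ** matrix_inv A = mat 1" using inv_props[OF assms] by blast
  have "transpose (matrix_inv Y) ** (transpose A ** A) ** (matrix_inv Y - matrix_inv A)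
      = transpose (A ** matrix_inv Y) ** (A ** (matrix_inv Y - matrix_inv A))"
    by (simp add: matrix_transpose_mul matrix_mul_assoc)
  also have "\<dots> = transpose (A ** matrix_inv Y) ** (A ** matrix_inv Y) - transpose (A ** matrix_inv Y)"
    by (simp add: msub_ldistrib AA)
  finally show ?thesis by (simp add: trace_sub trace_transp)
qed

lemma pair_ineq:
  fixes A Y1 Y2 :: "real^'n^'n"
  assumes A: "invertible A" and i1: "invertible Y1" and i2: "invertible Y2"
    and s: "Y1 + Y2 = A + A"
  shows "0 \<le> trace (transpose (matrix_inv Y1) ** (transpose A ** A) ** (matrix_inv Y1 - matrix_inv A))
           + trace (transpose (matrix_inv Y2) ** (transpose A ** A) ** (matrix_inv Y2 - matrix_inv A))"
proof -
  define X1 where "X1 = A ** matrix_inv Y1"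
  define X2 where "X2 = A ** matrix_inv Y2"
  have AA: "A ** matrix_inv A = mat 1" and AA': "matrix_inv A ** A = mat 1" using inv_props[OF A] by blast+
  have Y1: "matrix_inv Y1 ** Y1 = mat 1" using inv_props[OF i1] by blast
  have Y2: "Y2 ** matrix_inv Y2 = mat 1" using inv_props[OF i2] by blast
  have e1: "X1 ** (Y1 ** matrix_inv A) = mat 1"
    unfolding X1_def by (metis AA Y1 matrix_mul_assoc matrix_mul_rid)
  have e2: "(Y2 ** matrix_inv A) ** X2 = mat 1"
    unfolding X2_def by (metis AA' Y2 matrix_mul_assoc matrix_mul_rid)
  have "X1 ** (Y1 ** matrix_inv A + Y2 ** matrix_inv A) ** X2 = X1 ** ((A + A) ** matrix_inv A) ** X2"
    by (simp add: madd_rdistrib[symmetric] s)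
  also have "\<dots> = X1 ** X2 + X1 ** X2"
    by (simp only: madd_rdistrib AA matrix_add_ldistrib matrix_mul_rid)
  finally have "X1 ** X2 + X1 ** X2 = X1 ** (Y1 ** matrix_inv A + Y2 ** matrix_inv A) ** X2" ..
  also have "\<dots> = (X1 ** (Y1 ** matrix_inv A)) ** X2 + X1 ** ((Y2 ** matrix_inv A) ** X2)"
    by (simp add: matrix_add_ldistrib madd_rdistrib matrix_mul_assoc)
  also have "\<dots> = X2 + X1" by (simp add: e1 e2)
  finally have k: "X1 + X2 = X1 ** X2 + X1 ** X2" by (simp add: add.commute)
  show ?thesis
    unfolding F_formula[OF A] X1_def[symmetric] X2_def[symmetric]
    using key_ineq[OF k] by linarith
qed



lemma cont_quad: "continuous_on UNIV (\<lambda>M::real^'n^'n. trace (transpose M ** C ** (M - D)))"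
  unfolding trace_def matrix_matrix_mult_def transpose_def vec_lambda_beta
  by (intro continuous_intros)

lemma meas_F: "(\<lambda>Y::real^'n^'n. trace (transpose (matrix_inv Y) ** C ** (matrix_inv Y - D))) \<in> borel_measurable borel"
  using measurable_comp[OF meas_inv borel_measurable_continuous_onI[OF cont_quad[of C D]]]
  by (simp add: comp_def)

lemma cont_detA: "continuous_on UNIV (\<lambda>x::real^'n^'n. det (A + x))"
proof -
  have "continuous_on UNIV (det \<circ> (\<lambda>x::real^'n^'n. A + x))"
    by (rule continuous_on_compose[OF continuous_on_add[OF continuous_on_const continuous_on_id] cont_det])
  then show ?thesis by (simp add: o_def)
qed

lemma inv_set_borel: "{x::real^'n^'n. invertible (A + x)} \<in> sets borel"
proof -
  have "open {x::real^'n^'n. det (A + x) \<noteq> 0}"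
    by (intro open_Collect_neq cont_detA continuous_on_const)
  then show ?thesis by (simp add: invertible_det_nz)
qed

theorem theorem4p1:
  fixes M :: "'a measure"
    and A :: "real^'n^'n"
    and Ahat :: "'a \<Rightarrow> real^'n^'n"
    and R B :: "real^'n^'n"
  assumes "prob_space M"
    and "invertible A"
    and "Ahat \<in> borel_measurable M"
    and "AE \<omega> in M. invertible (Ahat \<omega>)"
    and "\<And>i j. integrable M (\<lambda>\<omega>. (matrix_inv (Ahat \<omega>) $ i $ j)\<^sup>2)"
    and "integrable M Ahat"
    and "integral\<^sup>L M Ahat = A"
    and "R = mat 1"
    and "distr M borel (\<lambda>\<omega>. Ahat \<omega> - A) = distr M borel (\<lambda>\<omega>. - (Ahat \<omega> - A))"
    and "B = transpose A ** A"
  shows "(integral\<^sup>L M (\<lambda>\<omega>. ip_BR B R (matrix_inv (Ahat \<omega>))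
                                   (matrix_inv (Ahat \<omega>) - matrix_inv A)))
         / (integral\<^sup>L M (\<lambda>\<omega>. normsq_BR B R (matrix_inv (Ahat \<omega>)))) \<ge> 0"
proof -
  define F where "F = (\<lambda>Y::real^'n^'n. trace (transpose (matrix_inv Y) ** (transpose A ** A) ** (matrix_inv Y - matrix_inv A)))"
  define G where "G = (\<lambda>z. F (A + z))"
  define Z where "Z = (\<lambda>\<omega>. Ahat \<omega> - A)"
  have Fm: "F \<in> borel_measurable borel" unfolding F_def by (rule meas_F)
  have Gm: "G \<in> borel_measurable borel"
    unfolding G_def by (rule measurable_compose[OF _ Fm]) measurable
  have Zm: "Z \<in> borel_measurable M" unfolding Z_def using assms(3) by measurable
  have nZm: "(\<lambda>\<omega>. - Z \<omega>) \<in> borel_measurable M" using Zm by measurable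
  have dist: "distr M borel Z = distr M borel (\<lambda>\<omega>. - Z \<omega>)" using assms(9) unfolding Z_def .
  have num: "(\<lambda>\<omega>. ip_BR B R (matrix_inv (Ahat \<omega>)) (matrix_inv (Ahat \<omega>) - matrix_inv A)) = (\<lambda>\<omega>. G (Z \<omega>))"
    by (simp add: fun_eq_iff ip_BR_one assms(8,10) G_def Z_def F_def)
  have G2: "G (- Z \<omega>) = F (A - (Ahat \<omega> - A))" for \<omega> by (simp add: G_def Z_def)
  have AE1: "AE \<omega> in M. invertible (A + Z \<omega>)" using assms(4) by (simp add: Z_def)
  have "AE x in distr M borel Z. invertible (A + x)"
    using AE1 by (subst AE_distr_iff[OF Zm]) (simp_all add: inv_set_borel)
  then have "AE x in distr M borel (\<lambda>\<omega>. - Z \<omega>). invertible (A + x)" by (simp only: dist)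
  then have AE2: "AE \<omega> in M. invertible (A + - Z \<omega>)"
    by (subst (asm) AE_distr_iff[OF nZm]) (simp_all add: inv_set_borel)
  have numge: "0 \<le> integral\<^sup>L M (\<lambda>\<omega>. G (Z \<omega>))"
  proof (cases "integrable M (\<lambda>\<omega>. G (Z \<omega>))")
    case True
    then have "integrable (distr M borel Z) G" by (simp add: integrable_distr_eq[OF Zm Gm])
    then have "integrable (distr M borel (\<lambda>\<omega>. - Z \<omega>)) G" by (simp only: dist)
    then have int2: "integrable M (\<lambda>\<omega>. G (- Z \<omega>))" by (simp add: integrable_distr_eq[OF nZm Gm])
    have eq: "integral\<^sup>L M (\<lambda>\<omega>. G (Z \<omega>)) = integral\<^sup>L M (\<lambda>\<omega>. G (- Z \<omega>))"
      using integral_distr[OF Zm Gm] integral_distr[OF nZm Gm] dist by simp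
    have "0 \<le> integral\<^sup>L M (\<lambda>\<omega>. G (Z \<omega>) + G (- Z \<omega>))"
    proof (rule integral_nonneg_AE)
      show "AE \<omega> in M. 0 \<le> G (Z \<omega>) + G (- Z \<omega>)"
        using AE1 AE2
      proof eventually_elim
        case (elim \<omega>)
        have s: "(A + Z \<omega>) + (A + - Z \<omega>) = A + A" by simp
        show ?case using pair_ineq[OF assms(2) elim(1) elim(2) s] unfolding G_def F_def .
      qed
    qed
    also have "\<dots> = integral\<^sup>L M (\<lambda>\<omega>. G (Z \<omega>)) + integral\<^sup>L M (\<lambda>\<omega>. G (- Z \<omega>))"
      by (rule Bochner_Integration.integral_add[OF True int2])
    finally show ?thesis using eq by linarith
  next
    case False
    then show ?thesis by (simp add: not_integrable_integral_eq)
  qed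
  have denge: "0 \<le> integral\<^sup>L M (\<lambda>\<omega>. normsq_BR B R (matrix_inv (Ahat \<omega>)))"
  proof (rule integral_nonneg_AE, rule AE_I2)
    fix \<omega>
    have "normsq_BR B R (matrix_inv (Ahat \<omega>)) = trace (transpose (A ** matrix_inv (Ahat \<omega>)) ** (A ** matrix_inv (Ahat \<omega>)))"
      by (simp add: normsq_BR_def ip_BR_one assms(8,10) matrix_transpose_mul matrix_mul_assoc)
    then show "0 \<le> normsq_BR B R (matrix_inv (Ahat \<omega>))" using trace_TT_nonneg by simp
  qed
  show ?thesis unfolding num using numge denge by (rule divide_nonneg_nonneg)
qed

end
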